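(* Let $S=\{(X_m,y_m)\}_{m=1}^T\in\mathcal{S}_T$, let $\tau(1),\tau(2),\dots$ be i.i.d. uniform on $\{1,\dots,T\}$, and let $\bar w_k=\frac1k\sum_{t=1}^k w_t$. Then for every $k\ge1$, $$\mathbb{E}_\tau\Big[\frac1T\sum_{m=1}^T\|X_m\bar w_k-y_m\|^2\Big]\le\mathbb{E}_\tau\Big[\frac1T\sum_{m=1}^T\|(I-P_m)(\bar w_k-w^\star)\|^2\Big]\le\frac1k.$$
   Context: Let $d\ge 1$, $T\ge1$. A task is a pair $(X_m,y_m)$ with $X_m\in\mathbb{R}^{n_m\times d}$, $y_m\in\mathbb{R}^{n_m}$ and $\operatorname{rank}(X_m)<d$. $\mathcal{S}_T$ denotes the set of collections $S=\{(X_m,y_m)\}_{m=1}^T$ of $T$ tasks such that $\|X_m\|\le 1$ (spectral norm) for all $m$ and there exists $w\in\mathbb{R}^d$ with $\|w\|\le 1$ and $y_m=X_mw$ for all $m$. Given $S$ and an ordering $\tau:\mathbb{N}^+\to\{1,\dots,T\}$, the iterates are $w_0=0$ and $w_t=w_{t-1}+X_{\tau(t)}^+(y_{\tau(t)}-X_{\tau(t)}w_{t-1})$, with $A^+$ the Moore–Penrose pseudoinverse. $w^\star$ denotes the minimum Euclidean-norm vector with $X_mw^\star=y_m$ for all $m$. $P_m=I-X_m^+X_m$ is the orthogonal projection onto $\ker X_m$. *)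

theory Defs
  imports "Jordan_Normal_Form.DL_Rank" "HOL-Probability.Product_PMF"
begin

definition sqnorm :: "real Matrix.vec \<Rightarrow> real" where
  "sqnorm v = scalar_prod v v"

definition spec_norm :: "real mat \<Rightarrow> real" where
  "spec_norm A = Sup {sqrt (sqnorm (A *\<^sub>v v)) | v. v \<in> carrier_vec (dim_col A) \<and> sqrt (sqnorm v) \<le> 1}"

definition is_pinv :: "real mat \<Rightarrow> real mat \<Rightarrow> bool" where
  "is_pinv A B \<longleftrightarrow> B \<in> carrier_mat (dim_col A) (dim_row A) \<and>
     A * B * A = A \<and> B * A * B = B \<and>
     transpose_mat (A * B) = A * B \<and> transpose_mat (B * A) = B * A"

definition pinv :: "real mat \<Rightarrow> real mat" where
  "pinv A = (THE B. is_pinv A B)"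

definition kerproj :: "real mat \<Rightarrow> real mat" where
  "kerproj A = 1\<^sub>m (dim_col A) - pinv A * A"

definition in_S :: "nat \<Rightarrow> nat \<Rightarrow> (nat \<Rightarrow> real mat) \<Rightarrow> (nat \<Rightarrow> real Matrix.vec) \<Rightarrow> bool" where
  "in_S d T X y \<longleftrightarrow>
     (\<forall>m\<in>{1..T}. dim_col (X m) = d \<and> dim_vec (y m) = dim_row (X m)
                  \<and> vec_space.rank (dim_row (X m)) (X m) < d
                  \<and> spec_norm (X m) \<le> 1) \<and>
     (\<exists>w\<in>carrier_vec d. sqrt (sqnorm w) \<le> 1 \<and> (\<forall>m\<in>{1..T}. X m *\<^sub>v w = y m))"

fun iter :: "nat \<Rightarrow> (nat \<Rightarrow> real mat) \<Rightarrow> (nat \<Rightarrow> real Matrix.vec) \<Rightarrow> (nat \<Rightarrow> nat) \<Rightarrow> nat \<Rightarrow> real Matrix.vec" where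
  "iter d X y \<tau> 0 = 0\<^sub>v d"
| "iter d X y \<tau> (Suc t) =
     iter d X y \<tau> t + pinv (X (\<tau> (Suc t))) *\<^sub>v (y (\<tau> (Suc t)) - X (\<tau> (Suc t)) *\<^sub>v iter d X y \<tau> t)"

definition wbar :: "nat \<Rightarrow> (nat \<Rightarrow> real mat) \<Rightarrow> (nat \<Rightarrow> real Matrix.vec) \<Rightarrow> (nat \<Rightarrow> nat) \<Rightarrow> nat \<Rightarrow> real Matrix.vec" where
  "wbar d X y \<tau> k = (1 / real k) \<cdot>\<^sub>v finsum_vec TYPE(real) d (\<lambda>t. iter d X y \<tau> t) {1..k}"

definition wstar :: "nat \<Rightarrow> nat \<Rightarrow> (nat \<Rightarrow> real mat) \<Rightarrow> (nat \<Rightarrow> real Matrix.vec) \<Rightarrow> real Matrix.vec" where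
  "wstar d T X y = (THE w. w \<in> carrier_vec d \<and> (\<forall>m\<in>{1..T}. X m *\<^sub>v w = y m) \<and>
      (\<forall>v\<in>carrier_vec d. (\<forall>m\<in>{1..T}. X m *\<^sub>v v = y m) \<longrightarrow> sqnorm w \<le> sqnorm v))"

text \<open>Distribution of the ordering tau restricted to 1..k: i.i.d. uniform on 1..T
  (values outside 1..k are irrelevant for the first k iterates and set to 1).\<close>
definition tau_pmf :: "nat \<Rightarrow> nat \<Rightarrow> (nat \<Rightarrow> nat) pmf" where
  "tau_pmf T k = Pi_pmf {1..k} 1 (\<lambda>_. pmf_of_set {1..T})"

end

theory Submission
  imports Defs
begin
unbundle no vec_syntax
unbundle no inner_syntax

lemma sqnorm_nonneg: "sqnorm (v::real Matrix.vec) \<ge> 0"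
  unfolding sqnorm_def scalar_prod_def by (auto intro: sum_nonneg)

lemma sqnorm_zero_iff: "sqnorm (v::real Matrix.vec) = 0 \<longleftrightarrow> v = 0\<^sub>v (dim_vec v)"
proof
  assume "sqnorm v = 0"
  hence "(\<Sum>i\<in>{0..<dim_vec v}. v $ i * v $ i) = 0" unfolding sqnorm_def scalar_prod_def by simp
  hence "\<forall>i\<in>{0..<dim_vec v}. v $ i * v $ i = 0"
    by (subst sum_nonneg_eq_0_iff[symmetric]) auto
  thus "v = 0\<^sub>v (dim_vec v)" by (intro eq_vecI) auto
next
  assume h: "v = 0\<^sub>v (dim_vec v)"
  show "sqnorm v = 0" by (subst h) (simp add: sqnorm_def scalar_prod_def)
qed

lemma scalar_self_zero: "(v::real Matrix.vec) \<bullet> v = 0 \<Longrightarrow> v \<in> carrier_vec n \<Longrightarrow> v = 0\<^sub>v n"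
  using sqnorm_zero_iff[of v] unfolding sqnorm_def by auto

lemma units_ringmat:
  assumes "P \<in> Units (ring_mat TYPE(real) n b)"
  shows "P \<in> carrier_mat n n \<and> (\<exists>Q \<in> carrier_mat n n. Q * P = 1\<^sub>m n \<and> P * Q = 1\<^sub>m n)"
  using assms unfolding Units_def ring_mat_def by auto

lemma inj_imp_inverse:
  fixes G :: "real mat"
  assumes G: "G \<in> carrier_mat n n" and inj: "\<And>v. v \<in> carrier_vec n \<Longrightarrow> G *\<^sub>v v = 0\<^sub>v n \<Longrightarrow> v = 0\<^sub>v n"
  shows "\<exists>K \<in> carrier_mat n n. G * K = 1\<^sub>m n \<and> K * G = 1\<^sub>m n"
proof -
  have "Determinant.det G \<noteq> 0" using det_0_iff_vec_prod_zero[OF G] inj by auto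
  hence "G \<in> Units (ring_mat TYPE(real) n undefined)" by (rule det_non_zero_imp_unit[OF G])
  from units_ringmat[OF this] show ?thesis by auto
qed

lemma sym_inverse:
  fixes G K :: "real mat"
  assumes G: "G \<in> carrier_mat n n" and K: "K \<in> carrier_mat n n" and s: "G\<^sup>T = G"
    and GK: "G * K = 1\<^sub>m n" and KG: "K * G = 1\<^sub>m n"
  shows "K\<^sup>T = K"
proof -
  have "(G * K)\<^sup>T = K\<^sup>T * G\<^sup>T" using transpose_mult[OF G K] .
  hence "K\<^sup>T * G = (G * K)\<^sup>T" using s by simp
  hence "K\<^sup>T * G = 1\<^sub>m n" using GK by simp
  hence "(K\<^sup>T * G) * K = K" using K by simp
  moreover have "(K\<^sup>T * G) * K = K\<^sup>T" using assoc_mult_mat[of "K\<^sup>T" n n G n K n] G K GK by simp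
  ultimately show ?thesis by simp
qed

lemma is_pinv_factor:
  fixes B C Bp Cp :: "real mat"
  assumes B: "B \<in> carrier_mat nr r" and C: "C \<in> carrier_mat r nc"
    and Bp: "Bp \<in> carrier_mat r nr" and Cp: "Cp \<in> carrier_mat nc r"
    and BpB: "Bp * B = 1\<^sub>m r" and CCp: "C * Cp = 1\<^sub>m r"
    and s1: "(B * Bp)\<^sup>T = B * Bp" and s2: "(Cp * C)\<^sup>T = Cp * C"
  shows "is_pinv (B * C) (Cp * Bp)"
proof -
  have CpBp: "Cp * Bp \<in> carrier_mat nc nr" and BC: "B * C \<in> carrier_mat nr nc" using B C Cp Bp by auto
  have e1: "B * C * (Cp * Bp) = B * Bp"
  proof -
    have "B * C * (Cp * Bp) = B * (C * (Cp * Bp))" using assoc_mult_mat[OF B C CpBp] .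
    also have "\<dots> = B * ((C * Cp) * Bp)" using assoc_mult_mat[OF C Cp Bp] by simp
    also have "\<dots> = B * Bp" using CCp Bp by simp
    finally show ?thesis .
  qed
  have e2: "Cp * Bp * (B * C) = Cp * C"
  proof -
    have "Cp * Bp * (B * C) = Cp * (Bp * (B * C))" using assoc_mult_mat[OF Cp Bp BC] .
    also have "\<dots> = Cp * ((Bp * B) * C)" using assoc_mult_mat[OF Bp B C] by simp
    also have "\<dots> = Cp * C" using BpB C by simp
    finally show ?thesis .
  qed
  have "B * C * (Cp * Bp) * (B * C) = B * C"
  proof -
    have "B * C * (Cp * Bp) * (B * C) = B * (Bp * (B * C))" unfolding e1 using assoc_mult_mat[OF B Bp BC] .
    also have "\<dots> = B * ((Bp * B) * C)" using assoc_mult_mat[OF Bp B C] by simp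
    also have "\<dots> = B * C" using BpB C by simp
    finally show ?thesis .
  qed
  moreover have "Cp * Bp * (B * C) * (Cp * Bp) = Cp * Bp"
  proof -
    have "Cp * Bp * (B * C) * (Cp * Bp) = Cp * (C * (Cp * Bp))" unfolding e2 using assoc_mult_mat[OF Cp C CpBp] .
    also have "\<dots> = Cp * ((C * Cp) * Bp)" using assoc_mult_mat[OF C Cp Bp] by simp
    also have "\<dots> = Cp * Bp" using CCp Bp by simp
    finally show ?thesis .
  qed
  moreover have "Cp * Bp \<in> carrier_mat (dim_col (B*C)) (dim_row (B*C))" using B C Cp Bp by auto
  ultimately show ?thesis unfolding is_pinv_def e1 e2 using s1 s2 by auto
qed

lemma is_pinv_unique:
  fixes A B C :: "real mat"
  assumes A: "A \<in> carrier_mat n m" and pB: "is_pinv A B" and pC: "is_pinv A C"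
  shows "B = C"
proof -
  from pB pC A have B: "B \<in> carrier_mat m n" and C: "C \<in> carrier_mat m n" unfolding is_pinv_def by auto
  note pB = pB[unfolded is_pinv_def] and pC = pC[unfolded is_pinv_def]
  have At: "A\<^sup>T \<in> carrier_mat m n" and Bt: "B\<^sup>T \<in> carrier_mat n m" and Ct: "C\<^sup>T \<in> carrier_mat n m"
    using A B C by auto
  have tAB: "(A * B)\<^sup>T = B\<^sup>T * A\<^sup>T" using transpose_mult[OF A B] .
  have tAC: "(A * C)\<^sup>T = C\<^sup>T * A\<^sup>T" using transpose_mult[OF A C] .
  have tBA: "(B * A)\<^sup>T = A\<^sup>T * B\<^sup>T" using transpose_mult[OF B A] .
  have tCA: "(C * A)\<^sup>T = A\<^sup>T * C\<^sup>T" using transpose_mult[OF C A] .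
  have ACA: "A * C * A = A" and CAC: "C * A * C = C" and sAC: "(A * C)\<^sup>T = A * C" and sCA: "(C * A)\<^sup>T = C * A"
    using pC by auto
  have ABA: "A * B * A = A" and BAB: "B * A * B = B" and sAB: "(A * B)\<^sup>T = A * B" and sBA: "(B * A)\<^sup>T = B * A"
    using pB by auto
  have AC: "A * C \<in> carrier_mat n n" and AB: "A * B \<in> carrier_mat n n" using A B C by auto
  have CA: "C * A \<in> carrier_mat m m" and BA: "B * A \<in> carrier_mat m m" using A B C by auto
  have AT: "A\<^sup>T = A\<^sup>T * (C\<^sup>T * A\<^sup>T)"
  proof -
    have "A\<^sup>T = (A * C * A)\<^sup>T" using ACA by simp
    also have "\<dots> = A\<^sup>T * (A * C)\<^sup>T" using transpose_mult[OF AC A] .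
    finally show ?thesis using tAC by simp
  qed
  have AT2: "A\<^sup>T = (A\<^sup>T * B\<^sup>T) * A\<^sup>T"
  proof -
    have "A\<^sup>T = (A * (B * A))\<^sup>T" using ABA assoc_mult_mat[OF A B A] by simp
    also have "\<dots> = (B * A)\<^sup>T * A\<^sup>T" using transpose_mult[OF A BA] .
    finally show ?thesis using tBA by simp
  qed
  have "B = B * (A * B)" using BAB assoc_mult_mat[OF B A B] by simp
  also have "\<dots> = B * (B\<^sup>T * A\<^sup>T)" using sAB tAB by simp
  also have "\<dots> = B * (B\<^sup>T * (A\<^sup>T * (C\<^sup>T * A\<^sup>T)))" using AT by simp
  also have "B\<^sup>T * (A\<^sup>T * (C\<^sup>T * A\<^sup>T)) = (B\<^sup>T * A\<^sup>T) * (C\<^sup>T * A\<^sup>T)"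
    using assoc_mult_mat[OF Bt At, of "C\<^sup>T * A\<^sup>T" n] Ct At by simp
  also have "\<dots> = (A * B) * (A * C)" using tAB tAC sAB sAC by simp
  also have "B * ((A * B) * (A * C)) = B * (A * ((B * A) * C))"
    using assoc_mult_mat[OF A B, of "A*C" n] assoc_mult_mat[OF B A C] A C by simp
  also have "\<dots> = (B * A) * ((B * A) * C)" using assoc_mult_mat[OF B A, of "B * A * C" n] BA C by simp
  also have "\<dots> = ((B * A) * (B * A)) * C" using assoc_mult_mat[OF BA BA C] by simp
  also have "(B * A) * (B * A) = B * A" using BAB assoc_mult_mat[OF BA B A] by simp
  finally have 1: "B = B * A * C" .
  have "C = (C * A) * C" using CAC by simp
  also have "\<dots> = (A\<^sup>T * C\<^sup>T) * C" using sCA tCA by simp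
  also have "\<dots> = (((A\<^sup>T * B\<^sup>T) * A\<^sup>T) * C\<^sup>T) * C" using AT2 by simp
  also have "((A\<^sup>T * B\<^sup>T) * A\<^sup>T) * C\<^sup>T = (A\<^sup>T * B\<^sup>T) * (A\<^sup>T * C\<^sup>T)"
  proof -
    have AtBt: "A\<^sup>T * B\<^sup>T \<in> carrier_mat m m" using At Bt by simp
    show ?thesis using assoc_mult_mat[OF AtBt At Ct] .
  qed
  also have "\<dots> = (B * A) * (C * A)" using tBA tCA sBA sCA by simp
  also have "(B * A) * (C * A) * C = (B * ((A * C) * A)) * C"
    using assoc_mult_mat[OF B A, of "C*A" m] assoc_mult_mat[OF A C A] A C CA by simp
  also have "\<dots> = B * A * C" using ACA by simp
  finally have 2: "C = B * A * C" .
  show ?thesis using 1 2 by simp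
qed


lemma mat_vec_zero[simp]: "A \<in> carrier_mat nr nc \<Longrightarrow> A *\<^sub>v 0\<^sub>v nc = (0\<^sub>v nr :: real Matrix.vec)"
  by (intro eq_vecI) auto

lemma pivot_prop:
  assumes "\<And>i. i < nr \<Longrightarrow> (f::nat\<Rightarrow>nat) i \<le> nc"
    and "\<And>i. i < nr \<Longrightarrow> Suc i < nr \<Longrightarrow> f (Suc i) > f i \<or> f (Suc i) = nc"
  shows "\<exists>r \<le> nr. \<forall>i<nr. f i < nc \<longleftrightarrow> i < r"
proof -
  have propg: "f j = nc" if "i < nr" "f i = nc" "i \<le> j" "j < nr" for i j
    using that
  proof (induction j)
    case 0 thus ?case by simp
  next
    case (Suc j)
    show ?case
    proof (cases "i = Suc j")
      case True thus ?thesis using Suc by simp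
    next
      case False
      hence "f j = nc" using Suc by simp
      thus ?thesis using assms(1)[of "Suc j"] assms(2)[of j] Suc by auto
    qed
  qed
  show ?thesis
  proof (cases "\<exists>i<nr. f i = nc")
    case True
    define r where "r = (LEAST i. i < nr \<and> f i = nc)"
    have r1: "r < nr \<and> f r = nc" unfolding r_def using True by (metis (mono_tags, lifting) LeastI)
    have "\<forall>i<nr. f i < nc \<longleftrightarrow> i < r"
    proof (intro allI impI iffI)
      fix i assume i: "i < nr" "f i < nc"
      show "i < r"
      proof (rule ccontr)
        assume "\<not> i < r" thus False using propg[of r i] r1 i by auto
      qed
    next
      fix i assume i: "i < nr" "i < r"
      hence "f i \<noteq> nc" unfolding r_def using not_less_Least by blast
      thus "f i < nc" using assms(1)[OF i(1)] by simp
    qed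
    thus ?thesis using r1 by (intro exI[of _ r]) auto
  next
    case False
    thus ?thesis using assms(1) by (intro exI[of _ nr]) (auto simp: order.not_eq_order_implies_strict)
  qed
qed

lemma sum_split_zero:
  fixes g :: "nat \<Rightarrow> real"
  assumes "r \<le> n" and "\<And>l. r \<le> l \<Longrightarrow> l < n \<Longrightarrow> g l = 0"
  shows "(\<Sum>l\<in>{0..<n}. g l) = (\<Sum>l\<in>{0..<r}. g l)"
proof -
  have "(\<Sum>l\<in>{0..<n}. g l) = (\<Sum>l\<in>{0..<r}. g l) + (\<Sum>l\<in>{r..<n}. g l)"
    using sum.atLeastLessThan_concat[of 0 r n g] assms(1) by simp
  moreover have "(\<Sum>l\<in>{r..<n}. g l) = 0" using assms(2) by (intro sum.neutral) auto
  ultimately show ?thesis by simp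
qed

lemma pinv_exists:
  fixes A :: "real mat"
  assumes A: "A \<in> carrier_mat nr nc"
  shows "\<exists>B. is_pinv A B"
proof -
  obtain R Z where g: "gauss_jordan A (0\<^sub>m nr 0) = (R, Z)" by (cases "gauss_jordan A (0\<^sub>m nr 0)")
  from gauss_jordan_transform[OF A _ g, of 0 undefined] obtain P where
    P: "P \<in> Units (ring_mat TYPE(real) nr undefined)" and R: "R = P * A" by auto
  from units_ringmat[OF P] obtain Q where Pc: "P \<in> carrier_mat nr nr" and Qc: "Q \<in> carrier_mat nr nr"
    and QP: "Q * P = 1\<^sub>m nr" and PQ: "P * Q = 1\<^sub>m nr" by auto
  have Rc: "R \<in> carrier_mat nr nc" using R Pc A by auto
  have "row_echelon_form R" by (rule gauss_jordan_row_echelon[OF A g])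
  then obtain f where pf: "pivot_fun R f nc" unfolding row_echelon_form_def using Rc by auto
  have dR: "dim_row R = nr" using Rc by auto
  note pd = pivot_funD[OF dR pf]
  have AQR: "A = Q * R"
  proof -
    have "Q * R = (Q * P) * A" using R assoc_mult_mat[OF Qc Pc A] by simp
    thus ?thesis using QP A by simp
  qed
  obtain r where r: "r \<le> nr" and rf: "\<And>i. i < nr \<Longrightarrow> f i < nc \<longleftrightarrow> i < r"
    using pivot_prop[of nr f nc] pd(1) pd(3) by blast
  have Rz: "R $$ (i, j) = 0" if "r \<le> i" "i < nr" "j < nc" for i j
  proof -
    have "f i = nc" using rf[of i] pd(1)[of i] that by auto
    hence "Matrix.row R i = 0\<^sub>v nc" using pivot_fun_zero_row_iff[OF pf Rc] that by auto
    hence "Matrix.row R i $ j = 0" using that by simp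
    thus ?thesis using that Rc by simp
  qed
  define C where "C = Matrix.mat r nc (\<lambda>(i,j). R $$ (i,j))"
  define B where "B = Matrix.mat nr r (\<lambda>(i,j). Q $$ (i,j))"
  have Cc: "C \<in> carrier_mat r nc" and Bc: "B \<in> carrier_mat nr r" unfolding C_def B_def by auto
  have ABC: "A = B * C"
  proof (rule eq_matI)
    fix i j assume i: "i < dim_row (B * C)" and j: "j < dim_col (B * C)"
    hence i: "i < nr" and j: "j < nc" using Bc Cc by auto
    have "A $$ (i, j) = (\<Sum>l\<in>{0..<nr}. Q $$ (i,l) * R $$ (l,j))"
      unfolding AQR using i j Qc Rc by (simp add: scalar_prod_def)
    also have "\<dots> = (\<Sum>l\<in>{0..<r}. Q $$ (i,l) * R $$ (l,j))"
      using Rz j r by (intro sum_split_zero) auto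
    also have "\<dots> = (B * C) $$ (i, j)"
      using i j r Bc Cc by (simp add: scalar_prod_def B_def C_def)
    finally show "A $$ (i, j) = (B * C) $$ (i, j)" .
  qed (use A Bc Cc in auto)
  define G1 where "G1 = B\<^sup>T * B"
  define G2 where "G2 = C * C\<^sup>T"
  have G1c: "G1 \<in> carrier_mat r r" and G2c: "G2 \<in> carrier_mat r r" unfolding G1_def G2_def using Bc Cc by auto
  have Btc: "B\<^sup>T \<in> carrier_mat r nr" and Ctc: "C\<^sup>T \<in> carrier_mat nc r" using Bc Cc by auto
  have G1s: "G1\<^sup>T = G1" unfolding G1_def using transpose_mult[OF Btc Bc] by simp
  have G2s: "G2\<^sup>T = G2" unfolding G2_def using transpose_mult[OF Cc Ctc] by simp
  have inj1: "v = 0\<^sub>v r" if v: "v \<in> carrier_vec r" and z: "G1 *\<^sub>v v = 0\<^sub>v r" for v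
  proof -
    have Bv: "B *\<^sub>v v \<in> carrier_vec nr" using Bc v by auto
    have "(B *\<^sub>v v) \<bullet> (B *\<^sub>v v) = (B\<^sup>T *\<^sub>v (B *\<^sub>v v)) \<bullet> v"
      using transpose_vec_mult_scalar[OF Bc v Bv] by simp
    also have "B\<^sup>T *\<^sub>v (B *\<^sub>v v) = 0\<^sub>v r" using z assoc_mult_mat_vec[OF Btc Bc v] unfolding G1_def by simp
    finally have "(B *\<^sub>v v) \<bullet> (B *\<^sub>v v) = 0" using v by simp
    hence Bv0: "B *\<^sub>v v = 0\<^sub>v nr" using scalar_self_zero Bv by blast
    define ve where "ve = Matrix.vec nr (\<lambda>i. if i < r then v $ i else 0)"
    have vec: "ve \<in> carrier_vec nr" unfolding ve_def by simp
    have "Q *\<^sub>v ve = B *\<^sub>v v"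
    proof (rule eq_vecI)
      fix i assume "i < dim_vec (B *\<^sub>v v)"
      hence i: "i < nr" using Bc by simp
      have "(Q *\<^sub>v ve) $ i = (\<Sum>l\<in>{0..<nr}. Q $$ (i,l) * ve $ l)"
        using i Qc vec by (simp add: scalar_prod_def)
      also have "\<dots> = (\<Sum>l\<in>{0..<r}. Q $$ (i,l) * ve $ l)"
        using r by (intro sum_split_zero) (auto simp: ve_def)
      also have "\<dots> = (B *\<^sub>v v) $ i"
        using i r v by (simp add: scalar_prod_def B_def ve_def)
      finally show "(Q *\<^sub>v ve) $ i = (B *\<^sub>v v) $ i" .
    qed (use Bc Qc in auto)
    hence "P *\<^sub>v (Q *\<^sub>v ve) = 0\<^sub>v nr" using Bv0 Pc by simp
    moreover have "P *\<^sub>v (Q *\<^sub>v ve) = ve" using assoc_mult_mat_vec[OF Pc Qc vec] PQ vec by simp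
    ultimately have ve0: "ve = 0\<^sub>v nr" by simp
    show ?thesis
    proof (rule eq_vecI)
      fix i assume "i < dim_vec (0\<^sub>v r)"
      hence i: "i < r" by simp
      have "ve $ i = v $ i" using i r unfolding ve_def by simp
      thus "v $ i = 0\<^sub>v r $ i" using ve0 i r by simp
    qed (use v in auto)
  qed
  have inj2: "y = 0\<^sub>v r" if y: "y \<in> carrier_vec r" and z: "G2 *\<^sub>v y = 0\<^sub>v r" for y
  proof -
    have Cy: "C\<^sup>T *\<^sub>v y \<in> carrier_vec nc" using Ctc y by auto
    have "(C\<^sup>T *\<^sub>v y) \<bullet> (C\<^sup>T *\<^sub>v y) = ((C\<^sup>T)\<^sup>T *\<^sub>v (C\<^sup>T *\<^sub>v y)) \<bullet> y"
      using transpose_vec_mult_scalar[OF Ctc y Cy] by simp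
    also have "(C\<^sup>T)\<^sup>T *\<^sub>v (C\<^sup>T *\<^sub>v y) = 0\<^sub>v r" using z assoc_mult_mat_vec[OF Cc Ctc y] unfolding G2_def by simp
    finally have "(C\<^sup>T *\<^sub>v y) \<bullet> (C\<^sup>T *\<^sub>v y) = 0" using y by simp
    hence Cy0: "C\<^sup>T *\<^sub>v y = 0\<^sub>v nc" using scalar_self_zero Cy by blast
    show ?thesis
    proof (rule eq_vecI)
      fix i assume "i < dim_vec (0\<^sub>v r)"
      hence i: "i < r" by simp
      have inr: "i < nr" using i r by simp
      have fi: "f i < nc" using rf[OF inr] i by simp
      have "(C\<^sup>T *\<^sub>v y) $ (f i) = (\<Sum>l\<in>{0..<r}. C $$ (l, f i) * y $ l)"
        using fi Cc y by (simp add: scalar_prod_def)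
      also have "\<dots> = (\<Sum>l\<in>{0..<r}. (if l = i then y $ l else 0))"
      proof (rule sum.cong)
        fix l assume "l \<in> {0..<r}"
        hence l: "l < r" by simp
        hence lnr: "l < nr" using r by simp
        show "C $$ (l, f i) * y $ l = (if l = i then y $ l else 0)"
          using pd(4)[OF inr fi] pd(5)[OF inr fi lnr] l fi unfolding C_def by auto
      qed simp
      also have "\<dots> = y $ i" using i by simp
      finally show "y $ i = 0\<^sub>v r $ i" using Cy0 fi i by simp
    qed (use y in auto)
  qed
  obtain L where Lc: "L \<in> carrier_mat r r" and G1L: "G1 * L = 1\<^sub>m r" and LG1: "L * G1 = 1\<^sub>m r"
    using inj_imp_inverse[OF G1c inj1] by blast
  obtain K where Kc: "K \<in> carrier_mat r r" and G2K: "G2 * K = 1\<^sub>m r" and KG2: "K * G2 = 1\<^sub>m r"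
    using inj_imp_inverse[OF G2c inj2] by blast
  have Ls: "L\<^sup>T = L" by (rule sym_inverse[OF G1c Lc G1s G1L LG1])
  have Ks: "K\<^sup>T = K" by (rule sym_inverse[OF G2c Kc G2s G2K KG2])
  have Bp: "L * B\<^sup>T \<in> carrier_mat r nr" and Cp: "C\<^sup>T * K \<in> carrier_mat nc r" using Lc Kc Btc Ctc by auto
  have BpB: "(L * B\<^sup>T) * B = 1\<^sub>m r" using assoc_mult_mat[OF Lc Btc Bc] LG1 unfolding G1_def by simp
  have CCp: "C * (C\<^sup>T * K) = 1\<^sub>m r" using assoc_mult_mat[OF Cc Ctc Kc] G2K unfolding G2_def by simp
  have s1: "(B * (L * B\<^sup>T))\<^sup>T = B * (L * B\<^sup>T)"
  proof -
    have "(B * (L * B\<^sup>T))\<^sup>T = (L * B\<^sup>T)\<^sup>T * B\<^sup>T" using transpose_mult[OF Bc Bp] .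
    also have "(L * B\<^sup>T)\<^sup>T = B * L" using transpose_mult[OF Lc Btc] Ls by simp
    also have "B * L * B\<^sup>T = B * (L * B\<^sup>T)" using assoc_mult_mat[OF Bc Lc Btc] .
    finally show ?thesis .
  qed
  have s2: "((C\<^sup>T * K) * C)\<^sup>T = (C\<^sup>T * K) * C"
  proof -
    have "((C\<^sup>T * K) * C)\<^sup>T = C\<^sup>T * (C\<^sup>T * K)\<^sup>T" using transpose_mult[OF Cp Cc] by simp
    also have "(C\<^sup>T * K)\<^sup>T = K * C" using transpose_mult[OF Ctc Kc] Ks by simp
    also have "C\<^sup>T * (K * C) = (C\<^sup>T * K) * C" using assoc_mult_mat[OF Ctc Kc Cc] by simp
    finally show ?thesis .
  qed
  have "is_pinv (B * C) ((C\<^sup>T * K) * (L * B\<^sup>T))"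
    by (rule is_pinv_factor[OF Bc Cc Bp Cp BpB CCp s1 s2])
  thus ?thesis unfolding ABC by blast
qed

lemma pinv_is_pinv:
  fixes A :: "real mat"
  shows "is_pinv A (pinv A)"
proof -
  have A: "A \<in> carrier_mat (dim_row A) (dim_col A)" by auto
  obtain B where B: "is_pinv A B" using pinv_exists[OF A] by blast
  have "\<exists>!B. is_pinv A B" using B is_pinv_unique[OF A] by blast
  thus ?thesis unfolding pinv_def by (rule theI')
qed


lemma pinv_carrier: "A \<in> carrier_mat n d \<Longrightarrow> pinv A \<in> carrier_mat d n"
  using pinv_is_pinv[of A] unfolding is_pinv_def by auto

lemma pinv_eqs:
  assumes A: "A \<in> carrier_mat n d"
  shows "A * pinv A * A = A" "pinv A * A * pinv A = pinv A"
    "(A * pinv A)\<^sup>T = A * pinv A" "(pinv A * A)\<^sup>T = pinv A * A"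
  using pinv_is_pinv[of A] unfolding is_pinv_def by auto

lemma proj_props:
  assumes A: "A \<in> carrier_mat n d"
  shows "pinv A * A \<in> carrier_mat d d" "(pinv A * A)\<^sup>T = pinv A * A"
    "(pinv A * A) * (pinv A * A) = pinv A * A" "A * (pinv A * A) = A"
proof -
  have Ap: "pinv A \<in> carrier_mat d n" by (rule pinv_carrier[OF A])
  note e = pinv_eqs[OF A]
  show "pinv A * A \<in> carrier_mat d d" using Ap A by simp
  show "(pinv A * A)\<^sup>T = pinv A * A" using e by simp
  have "(pinv A * A) * (pinv A * A) = ((pinv A * A) * pinv A) * A"
    using assoc_mult_mat[of "pinv A * A" d d "pinv A" n A d] Ap A by simp
  thus "(pinv A * A) * (pinv A * A) = pinv A * A" using e by simp
  show "A * (pinv A * A) = A" using assoc_mult_mat[OF A Ap A] e by simp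
qed

lemma sqnorm_add:
  fixes a b :: "real Matrix.vec"
  assumes a: "a \<in> carrier_vec n" and b: "b \<in> carrier_vec n"
  shows "sqnorm (a + b) = sqnorm a + 2 * (a \<bullet> b) + sqnorm b"
proof -
  have "sqnorm (a + b) = (\<Sum>i\<in>{0..<n}. (a $ i + b $ i) * (a $ i + b $ i))"
    unfolding sqnorm_def scalar_prod_def using a b by simp
  also have "\<dots> = (\<Sum>i\<in>{0..<n}. a $ i * a $ i + 2 * (a $ i * b $ i) + b $ i * b $ i)"
    by (intro sum.cong) (auto simp: algebra_simps)
  also have "\<dots> = sqnorm a + 2 * (a \<bullet> b) + sqnorm b"
    unfolding sqnorm_def scalar_prod_def using a b by (simp add: sum.distrib sum_distrib_left)
  finally show ?thesis .
qed

lemma sqnorm_smult: "sqnorm (c \<cdot>\<^sub>v (v::real Matrix.vec)) = c^2 * sqnorm v"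
  unfolding sqnorm_def scalar_prod_def by (simp add: sum_distrib_left power2_eq_square algebra_simps)

lemma proj_pythag:
  fixes P :: "real mat"
  assumes P: "P \<in> carrier_mat d d" and s: "P\<^sup>T = P" and idem: "P * P = P" and v: "v \<in> carrier_vec d"
  shows "sqnorm v = sqnorm (P *\<^sub>v v) + sqnorm (v - P *\<^sub>v v)"
proof -
  define a where "a = P *\<^sub>v v"
  define b where "b = v - a"
  have ac: "a \<in> carrier_vec d" and bc: "b \<in> carrier_vec d" unfolding a_def b_def using P v by auto
  have Pb: "P *\<^sub>v b = 0\<^sub>v d"
  proof -
    have "P *\<^sub>v b = P *\<^sub>v v - P *\<^sub>v a" unfolding b_def using mult_minus_distrib_mat_vec[OF P v ac] .
    also have "P *\<^sub>v a = (P * P) *\<^sub>v v" unfolding a_def using assoc_mult_mat_vec[OF P P v] by simp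
    finally show ?thesis using idem P v by (intro eq_vecI) auto
  qed
  have "a \<bullet> b = (P\<^sup>T *\<^sub>v v) \<bullet> b" unfolding a_def using s by simp
  also have "\<dots> = v \<bullet> (P *\<^sub>v b)" using transpose_vec_mult_scalar[OF P bc v] .
  also have "\<dots> = 0" using Pb v by simp
  finally have ab: "a \<bullet> b = 0" .
  have "v = a + b" unfolding b_def using ac v by (intro eq_vecI) auto
  hence "sqnorm v = sqnorm a + 2 * (a \<bullet> b) + sqnorm b" using sqnorm_add[OF ac bc] by simp
  thus ?thesis using ab unfolding a_def b_def by simp
qed

lemma spec_norm_bound:
  fixes A :: "real mat"
  assumes A: "A \<in> carrier_mat n d" and sn: "spec_norm A \<le> 1" and u: "u \<in> carrier_vec d"
  shows "sqnorm (A *\<^sub>v u) \<le> sqnorm u"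
proof -
  define S where "S = {sqrt (sqnorm (A *\<^sub>v v)) | v. v \<in> carrier_vec (dim_col A) \<and> sqrt (sqnorm v) \<le> 1}"
  define M where "M = sqrt (\<Sum>i\<in>{0..<n}. (\<Sum>j\<in>{0..<d}. \<bar>A $$ (i,j)\<bar>)^2)"
  have bnd: "sqrt (sqnorm (A *\<^sub>v v)) \<le> M" if v: "v \<in> carrier_vec d" "sqrt (sqnorm v) \<le> 1" for v
  proof -
    have sv: "sqnorm v \<le> 1" using v(2) by simp
    have vj: "\<bar>v $ j\<bar> \<le> 1" if j: "j < d" for j
    proof -
      have "v $ j * v $ j \<le> (\<Sum>i\<in>{0..<d}. v $ i * v $ i)"
        using j by (intro member_le_sum) auto
      hence "(v $ j)^2 \<le> 1" using sv v(1) unfolding sqnorm_def scalar_prod_def by (simp add: power2_eq_square)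
      thus ?thesis using abs_le_square_iff[of "v $ j" 1] by simp
    qed
    have comp: "((A *\<^sub>v v) $ i)^2 \<le> (\<Sum>j\<in>{0..<d}. \<bar>A $$ (i,j)\<bar>)^2" if i: "i < n" for i
    proof -
      have "(A *\<^sub>v v) $ i = (\<Sum>j\<in>{0..<d}. A $$ (i,j) * v $ j)"
        using i A v(1) by (simp add: scalar_prod_def)
      hence "\<bar>(A *\<^sub>v v) $ i\<bar> \<le> (\<Sum>j\<in>{0..<d}. \<bar>A $$ (i,j) * v $ j\<bar>)" by (simp add: sum_abs)
      also have "\<dots> \<le> (\<Sum>j\<in>{0..<d}. \<bar>A $$ (i,j)\<bar>)"
      proof (rule sum_mono)
        fix j assume "j \<in> {0..<d}"
        hence "\<bar>v $ j\<bar> \<le> 1" using vj by auto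
        thus "\<bar>A $$ (i,j) * v $ j\<bar> \<le> \<bar>A $$ (i,j)\<bar>"
          by (simp add: abs_mult mult_left_le)
      qed
      finally have h: "\<bar>(A *\<^sub>v v) $ i\<bar> \<le> (\<Sum>j\<in>{0..<d}. \<bar>A $$ (i,j)\<bar>)" .
      have "\<bar>(A *\<^sub>v v) $ i\<bar>^2 \<le> (\<Sum>j\<in>{0..<d}. \<bar>A $$ (i,j)\<bar>)^2"
        by (rule power_mono[OF h abs_ge_zero])
      thus ?thesis by simp
    qed
    have "sqnorm (A *\<^sub>v v) = (\<Sum>i\<in>{0..<n}. ((A *\<^sub>v v) $ i)^2)"
      unfolding sqnorm_def scalar_prod_def using A by (simp add: power2_eq_square)
    also have "\<dots> \<le> (\<Sum>i\<in>{0..<n}. (\<Sum>j\<in>{0..<d}. \<bar>A $$ (i,j)\<bar>)^2)"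
      using comp by (intro sum_mono) auto
    finally show ?thesis unfolding M_def by simp
  qed
  have bdd: "bdd_above S" unfolding S_def using bnd A by (auto intro!: bdd_aboveI[of _ M])
  have inS: "sqrt (sqnorm (A *\<^sub>v v)) \<le> 1" if v: "v \<in> carrier_vec d" "sqrt (sqnorm v) \<le> 1" for v
  proof -
    have "sqrt (sqnorm (A *\<^sub>v v)) \<in> S" unfolding S_def using v A by auto
    hence "sqrt (sqnorm (A *\<^sub>v v)) \<le> Sup S" using bdd by (rule cSup_upper)
    also have "Sup S = spec_norm A" unfolding S_def spec_norm_def by simp
    finally have "sqrt (sqnorm (A *\<^sub>v v)) \<le> spec_norm A" .
    thus ?thesis using sn by linarith
  qed
  show ?thesis
  proof (cases "sqnorm u = 0")
    case True
    hence "u = 0\<^sub>v d" using sqnorm_zero_iff[of u] u by auto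
    hence "A *\<^sub>v u = 0\<^sub>v n" using A by simp
    hence "sqnorm (A *\<^sub>v u) = 0" by (simp add: sqnorm_def)
    thus ?thesis using True by simp
  next
    case False
    define c where "c = sqrt (sqnorm u)"
    have c: "c > 0" unfolding c_def using False sqnorm_nonneg[of u] by simp
    have c2: "c^2 = sqnorm u" unfolding c_def using sqnorm_nonneg[of u] by simp
    define v where "v = (1 / c) \<cdot>\<^sub>v u"
    have vc: "v \<in> carrier_vec d" unfolding v_def using u by simp
    have "sqnorm v = (1/c)^2 * c^2" unfolding v_def sqnorm_smult c2 ..
    hence "sqnorm v = 1" using c by (simp add: field_simps)
    hence "sqrt (sqnorm (A *\<^sub>v v)) \<le> 1" using inS[OF vc] by simp
    hence "sqnorm (A *\<^sub>v v) \<le> 1" by simp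
    moreover have "A *\<^sub>v v = (1/c) \<cdot>\<^sub>v (A *\<^sub>v u)" unfolding v_def using mult_mat_vec[OF A u] .
    ultimately have "(1/c)^2 * sqnorm (A *\<^sub>v u) \<le> 1" by (simp add: sqnorm_smult)
    hence "sqnorm (A *\<^sub>v u) \<le> c^2" using c by (simp add: field_simps)
    thus ?thesis using c2 by simp
  qed
qed


lemma rows_mvec_eq:
  fixes rs :: "real Matrix.vec list"
  assumes rs: "set rs \<subseteq> carrier_vec d"
  shows "(Matrix.mat_of_rows d rs *\<^sub>v v = Matrix.mat_of_rows d rs *\<^sub>v w) \<longleftrightarrow> (\<forall>r\<in>set rs. r \<bullet> v = r \<bullet> w)"
proof
  assume h: "Matrix.mat_of_rows d rs *\<^sub>v v = Matrix.mat_of_rows d rs *\<^sub>v w"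
  show "\<forall>r\<in>set rs. r \<bullet> v = r \<bullet> w"
  proof
    fix r assume "r \<in> set rs"
    then obtain i where i: "i < length rs" and ri: "r = rs ! i" by (auto simp: in_set_conv_nth)
    have rc: "rs ! i \<in> carrier_vec d" using rs i by auto
    have "(Matrix.mat_of_rows d rs *\<^sub>v v) $ i = (Matrix.mat_of_rows d rs *\<^sub>v w) $ i" using h by simp
    thus "r \<bullet> v = r \<bullet> w" using i rc ri by simp
  qed
next
  assume h: "\<forall>r\<in>set rs. r \<bullet> v = r \<bullet> w"
  show "Matrix.mat_of_rows d rs *\<^sub>v v = Matrix.mat_of_rows d rs *\<^sub>v w"
  proof (rule eq_vecI)
    fix i assume "i < dim_vec (Matrix.mat_of_rows d rs *\<^sub>v w)"
    hence i: "i < length rs" by simp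
    have rc: "rs ! i \<in> carrier_vec d" using rs i by auto
    show "(Matrix.mat_of_rows d rs *\<^sub>v v) $ i = (Matrix.mat_of_rows d rs *\<^sub>v w) $ i"
      using i rc h by simp
  qed simp
qed

lemma mvec_eq_rows:
  fixes A :: "real mat"
  shows "(A *\<^sub>v v = A *\<^sub>v w) \<longleftrightarrow> (\<forall>r\<in>set (Matrix.rows A). r \<bullet> v = r \<bullet> w)"
  using rows_mvec_eq[of "Matrix.rows A" "dim_col A" v w] by simp

definition stackm :: "nat \<Rightarrow> nat \<Rightarrow> (nat \<Rightarrow> real mat) \<Rightarrow> real mat" where
  "stackm d T X = Matrix.mat_of_rows d (concat (map (\<lambda>m. Matrix.rows (X m)) [1..<Suc T]))"

lemma stack_eq:
  assumes dims: "\<forall>m\<in>{1..T}. dim_col (X m) = d"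
  shows "(stackm d T X *\<^sub>v v = stackm d T X *\<^sub>v w) \<longleftrightarrow> (\<forall>m\<in>{1..T}. X m *\<^sub>v v = X m *\<^sub>v w)"
proof -
  let ?rs = "concat (map (\<lambda>m. Matrix.rows (X m)) [1..<Suc T])"
  have su: "set [1..<Suc T] = {1..T}" by auto
  have set: "set ?rs = (\<Union>m\<in>{1..T}. set (Matrix.rows (X m)))"
    unfolding set_concat set_map su by simp
  have "set ?rs \<subseteq> carrier_vec d" unfolding set using dims rows_carrier by fastforce
  hence "(stackm d T X *\<^sub>v v = stackm d T X *\<^sub>v w) \<longleftrightarrow> (\<forall>r\<in>set ?rs. r \<bullet> v = r \<bullet> w)"
    unfolding stackm_def by (rule rows_mvec_eq)
  also have "\<dots> \<longleftrightarrow> (\<forall>m\<in>{1..T}. \<forall>r\<in>set (Matrix.rows (X m)). r \<bullet> v = r \<bullet> w)" unfolding set by blast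
  also have "\<dots> \<longleftrightarrow> (\<forall>m\<in>{1..T}. X m *\<^sub>v v = X m *\<^sub>v w)" using mvec_eq_rows by blast
  finally show ?thesis .
qed

lemma stack_carrier: "stackm d T X \<in> carrier_mat (dim_row (stackm d T X)) d"
  unfolding stackm_def by simp

lemma wstar_props:
  assumes S: "in_S d T X y"
  shows "wstar d T X y \<in> carrier_vec d \<and> (\<forall>m\<in>{1..T}. X m *\<^sub>v wstar d T X y = y m) \<and> sqnorm (wstar d T X y) \<le> 1"
proof -
  from S obtain w0 where w0: "w0 \<in> carrier_vec d" "sqrt (sqnorm w0) \<le> 1" "\<forall>m\<in>{1..T}. X m *\<^sub>v w0 = y m"
    and dims: "\<forall>m\<in>{1..T}. dim_col (X m) = d" unfolding in_S_def by auto
  define M where "M = stackm d T X"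
  define N where "N = dim_row M"
  have Mc: "M \<in> carrier_mat N d" unfolding M_def N_def using stack_carrier .
  define Pi where "Pi = pinv M * M"
  note pp = proj_props[OF Mc, folded Pi_def]
  have Mpc: "pinv M \<in> carrier_mat d N" using pinv_carrier[OF Mc] .
  define u where "u = Pi *\<^sub>v w0"
  have uc: "u \<in> carrier_vec d" unfolding u_def using pp(1) w0(1) by simp
  have Mu: "M *\<^sub>v u = M *\<^sub>v w0"
    unfolding u_def using assoc_mult_mat_vec[OF Mc pp(1) w0(1), symmetric] pp(4) by simp
  have solchar: "(\<forall>m\<in>{1..T}. X m *\<^sub>v v = y m) \<longleftrightarrow> M *\<^sub>v v = M *\<^sub>v w0" for v
    unfolding M_def using stack_eq[OF dims, of v w0] w0(3) by auto
  have usol: "\<forall>m\<in>{1..T}. X m *\<^sub>v u = y m" using solchar Mu by simp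
  have Piv: "Pi *\<^sub>v v = u" if v: "v \<in> carrier_vec d" "M *\<^sub>v v = M *\<^sub>v w0" for v
  proof -
    have "Pi *\<^sub>v v = pinv M *\<^sub>v (M *\<^sub>v v)" unfolding Pi_def using assoc_mult_mat_vec[OF Mpc Mc v(1)] .
    also have "\<dots> = pinv M *\<^sub>v (M *\<^sub>v w0)" using v(2) by simp
    also have "\<dots> = u" unfolding u_def Pi_def using assoc_mult_mat_vec[OF Mpc Mc w0(1)] by simp
    finally show ?thesis .
  qed
  have pyth: "sqnorm v = sqnorm u + sqnorm (v - u)" if v: "v \<in> carrier_vec d" "M *\<^sub>v v = M *\<^sub>v w0" for v
    using proj_pythag[OF pp(1) pp(2) pp(3) v(1)] Piv[OF v] by simp
  have umin: "sqnorm u \<le> sqnorm v" if v: "v \<in> carrier_vec d" "\<forall>m\<in>{1..T}. X m *\<^sub>v v = y m" for v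
    using pyth[of v] v solchar sqnorm_nonneg[of "v - u"] by auto
  have the: "wstar d T X y = u" unfolding wstar_def
  proof (rule the_equality)
    show "u \<in> carrier_vec d \<and> (\<forall>m\<in>{1..T}. X m *\<^sub>v u = y m) \<and>
      (\<forall>v\<in>carrier_vec d. (\<forall>m\<in>{1..T}. X m *\<^sub>v v = y m) \<longrightarrow> sqnorm u \<le> sqnorm v)"
      using uc usol umin by auto
  next
    fix w assume w: "w \<in> carrier_vec d \<and> (\<forall>m\<in>{1..T}. X m *\<^sub>v w = y m) \<and>
      (\<forall>v\<in>carrier_vec d. (\<forall>m\<in>{1..T}. X m *\<^sub>v v = y m) \<longrightarrow> sqnorm w \<le> sqnorm v)"
    hence wc: "w \<in> carrier_vec d" and wM: "M *\<^sub>v w = M *\<^sub>v w0" and wle: "sqnorm w \<le> sqnorm u"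
      using solchar uc usol by auto
    have "sqnorm (w - u) \<le> 0" using pyth[OF wc wM] wle by simp
    hence "sqnorm (w - u) = 0" using sqnorm_nonneg[of "w - u"] by simp
    hence z: "w - u = 0\<^sub>v d" using sqnorm_zero_iff[of "w - u"] wc uc by simp
    show "w = u"
    proof (rule eq_vecI)
      fix i assume "i < dim_vec u"
      hence i: "i < d" using uc by simp
      have "(w - u) $ i = 0" using z i by simp
      thus "w $ i = u $ i" using i uc wc by simp
    qed (use wc uc in simp)
  qed
  have "sqnorm u \<le> sqnorm w0" using umin[OF w0(1) w0(3)] .
  moreover have "sqnorm w0 \<le> 1" using w0(2) by simp
  ultimately show ?thesis unfolding the using uc usol by simp
qed


definition good :: "nat \<Rightarrow> (nat \<Rightarrow> nat) \<Rightarrow> bool" where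
  "good T \<tau> \<longleftrightarrow> (\<forall>t. \<tau> t \<in> {1..T})"

definition Pm :: "(nat \<Rightarrow> real mat) \<Rightarrow> nat \<Rightarrow> real mat" where
  "Pm X m = pinv (X m) * X m"

lemma inS_dims:
  assumes "in_S d T X y" "m \<in> {1..T}"
  shows "X m \<in> carrier_mat (dim_row (X m)) d" "y m \<in> carrier_vec (dim_row (X m))"
proof -
  have "\<forall>m\<in>{1..T}. dim_col (X m) = d \<and> dim_vec (y m) = dim_row (X m)"
    using assms(1) unfolding in_S_def by blast
  hence "dim_col (X m) = d" "dim_vec (y m) = dim_row (X m)" using assms(2) by auto
  thus "X m \<in> carrier_mat (dim_row (X m)) d" "y m \<in> carrier_vec (dim_row (X m))"
    unfolding carrier_mat_def carrier_vec_def by auto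
qed

lemma Pm_props:
  assumes "in_S d T X y" "m \<in> {1..T}"
  shows "Pm X m \<in> carrier_mat d d" "(Pm X m)\<^sup>T = Pm X m" "Pm X m * Pm X m = Pm X m"
    "X m * Pm X m = X m"
  using proj_props[OF inS_dims(1)[OF assms]] unfolding Pm_def by auto

lemma Pm_kerproj:
  assumes "in_S d T X y" "m \<in> {1..T}"
  shows "1\<^sub>m d - kerproj (X m) = Pm X m"
proof -
  have Pc: "Pm X m \<in> carrier_mat d d" by (rule Pm_props(1)[OF assms])
  have dc: "dim_col (X m) = d" using assms unfolding in_S_def by auto
  show ?thesis unfolding kerproj_def dc Pm_def[symmetric]
    using Pc by (intro eq_matI) auto
qed

lemma iter_carrier:
  assumes S: "in_S d T X y" and g: "good T \<tau>"
  shows "iter d X y \<tau> t \<in> carrier_vec d"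
proof (induction t)
  case 0 thus ?case by simp
next
  case (Suc t)
  let ?m = "\<tau> (Suc t)"
  have m: "?m \<in> {1..T}" using g unfolding good_def by auto
  note dm = inS_dims[OF S m]
  have Ac: "pinv (X ?m) \<in> carrier_mat d (dim_row (X ?m))" using pinv_carrier[OF dm(1)] .
  have v1: "X ?m *\<^sub>v iter d X y \<tau> t \<in> carrier_vec (dim_row (X ?m))"
    using mult_mat_vec_carrier[OF dm(1) Suc.IH] .
  have v2: "y ?m - X ?m *\<^sub>v iter d X y \<tau> t \<in> carrier_vec (dim_row (X ?m))"
    using minus_carrier_vec[OF dm(2) v1] .
  have v3: "pinv (X ?m) *\<^sub>v (y ?m - X ?m *\<^sub>v iter d X y \<tau> t) \<in> carrier_vec d"
    using mult_mat_vec_carrier[OF Ac v2] .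
  show ?case unfolding iter.simps using add_carrier_vec[OF Suc.IH v3] .
qed

lemma iter_cong:
  assumes "\<And>s. 1 \<le> s \<Longrightarrow> s \<le> t \<Longrightarrow> \<tau> s = \<tau>' s"
  shows "iter d X y \<tau> t = iter d X y \<tau>' t"
  using assms
proof (induction t)
  case 0 thus ?case by simp
next
  case (Suc t)
  have "iter d X y \<tau> t = iter d X y \<tau>' t"
    apply (rule Suc.IH) using Suc.prems by simp
  moreover have "\<tau> (Suc t) = \<tau>' (Suc t)" using Suc.prems by simp
  ultimately show ?case by simp
qed

lemma iter_step:
  assumes S: "in_S d T X y" and g: "good T \<tau>"
  defines "ws \<equiv> wstar d T X y"
  shows "iter d X y \<tau> (Suc t) - ws = (iter d X y \<tau> t - ws) - Pm X (\<tau> (Suc t)) *\<^sub>v (iter d X y \<tau> t - ws)"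
proof -
  let ?m = "\<tau> (Suc t)"
  let ?w = "iter d X y \<tau> t"
  have m: "?m \<in> {1..T}" using g unfolding good_def by auto
  note dm = inS_dims[OF S m]
  define n where "n = dim_row (X ?m)"
  have Xc: "X ?m \<in> carrier_mat n d" using dm(1) unfolding n_def .
  have Ac: "pinv (X ?m) \<in> carrier_mat d n" using pinv_carrier[OF Xc] .
  have Pc: "Pm X ?m \<in> carrier_mat d d" using Pm_props(1)[OF S m] .
  have wc: "?w \<in> carrier_vec d" using iter_carrier[OF S g] .
  have wsp: "ws \<in> carrier_vec d" "X ?m *\<^sub>v ws = y ?m" using wstar_props[OF S] m unfolding ws_def by auto
  have "y ?m - X ?m *\<^sub>v ?w = X ?m *\<^sub>v (ws - ?w)"
    using mult_minus_distrib_mat_vec[OF Xc wsp(1) wc] wsp(2) by simp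
  hence "pinv (X ?m) *\<^sub>v (y ?m - X ?m *\<^sub>v ?w) = Pm X ?m *\<^sub>v (ws - ?w)"
    unfolding Pm_def using assoc_mult_mat_vec[OF Ac Xc, of "ws - ?w"] wsp(1) wc by simp
  also have "\<dots> = Pm X ?m *\<^sub>v ws - Pm X ?m *\<^sub>v ?w"
    using mult_minus_distrib_mat_vec[OF Pc wsp(1) wc] .
  finally have e1: "pinv (X ?m) *\<^sub>v (y ?m - X ?m *\<^sub>v ?w) = Pm X ?m *\<^sub>v ws - Pm X ?m *\<^sub>v ?w" .
  have e2: "Pm X ?m *\<^sub>v (?w - ws) = Pm X ?m *\<^sub>v ?w - Pm X ?m *\<^sub>v ws"
    using mult_minus_distrib_mat_vec[OF Pc wc wsp(1)] .
  have c1: "Pm X ?m *\<^sub>v ws \<in> carrier_vec d" "Pm X ?m *\<^sub>v ?w \<in> carrier_vec d" using Pc wc wsp by auto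
  have gen: "w + (a - b) - z = (w - z) - (b - a)"
    if "w \<in> carrier_vec d" "z \<in> carrier_vec d" "a \<in> carrier_vec d" "b \<in> carrier_vec d"
    for w z a b :: "real Matrix.vec"
    using that by (intro eq_vecI) auto
  show ?thesis unfolding iter.simps e1 e2 using gen[OF wc wsp(1) c1] .
qed

lemma sq_step:
  assumes S: "in_S d T X y" and g: "good T \<tau>"
  defines "ws \<equiv> wstar d T X y"
  shows "sqnorm (iter d X y \<tau> t - ws) = sqnorm (iter d X y \<tau> (Suc t) - ws) + sqnorm (Pm X (\<tau> (Suc t)) *\<^sub>v (iter d X y \<tau> t - ws))"
proof -
  let ?m = "\<tau> (Suc t)"
  have m: "?m \<in> {1..T}" using g unfolding good_def by auto
  have ec: "iter d X y \<tau> t - ws \<in> carrier_vec d" using iter_carrier[OF S g] wstar_props[OF S] unfolding ws_def by auto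
  note pp = Pm_props[OF S m]
  show ?thesis using proj_pythag[OF pp(1) pp(2) pp(3) ec] iter_step[OF S g, of t] unfolding ws_def by simp
qed

lemma Pm_contract:
  assumes S: "in_S d T X y" and m: "m \<in> {1..T}" and v: "v \<in> carrier_vec d"
  shows "sqnorm (Pm X m *\<^sub>v v) \<le> sqnorm v"
proof -
  note pp = Pm_props[OF S m]
  show ?thesis using proj_pythag[OF pp(1) pp(2) pp(3) v] sqnorm_nonneg[of "v - Pm X m *\<^sub>v v"] by simp
qed

lemma first_pointwise:
  assumes S: "in_S d T X y" and m: "m \<in> {1..T}" and w: "w \<in> carrier_vec d"
  shows "sqnorm (X m *\<^sub>v w - y m) \<le> sqnorm (Pm X m *\<^sub>v (w - wstar d T X y))"
proof -
  define ws where "ws = wstar d T X y"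
  note dm = inS_dims[OF S m]
  define n where "n = dim_row (X m)"
  have Xc: "X m \<in> carrier_mat n d" using dm(1) unfolding n_def .
  have wsp: "ws \<in> carrier_vec d" "X m *\<^sub>v ws = y m" using wstar_props[OF S] m unfolding ws_def by auto
  have sn: "spec_norm (X m) \<le> 1" using S m unfolding in_S_def by auto
  note pp = Pm_props[OF S m]
  have uc: "w - ws \<in> carrier_vec d" using w wsp by simp
  have "X m *\<^sub>v w - y m = X m *\<^sub>v (w - ws)"
    using mult_minus_distrib_mat_vec[OF Xc w wsp(1)] wsp(2) by simp
  also have "\<dots> = (X m * Pm X m) *\<^sub>v (w - ws)" using pp(4) by simp
  also have "\<dots> = X m *\<^sub>v (Pm X m *\<^sub>v (w - ws))" using assoc_mult_mat_vec[OF Xc pp(1) uc] .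
  finally have e: "X m *\<^sub>v w - y m = X m *\<^sub>v (Pm X m *\<^sub>v (w - ws))" .
  have "Pm X m *\<^sub>v (w - ws) \<in> carrier_vec d" using pp(1) uc by simp
  from spec_norm_bound[OF Xc sn this] show ?thesis unfolding e ws_def .
qed


lemma avg_sqnorm:
  fixes a :: "nat \<Rightarrow> real Matrix.vec"
  assumes k: "k \<ge> 1" and a: "\<And>t. t \<in> {1..k} \<Longrightarrow> a t \<in> carrier_vec n"
  shows "sqnorm (Matrix.vec n (\<lambda>i. (1/real k) * (\<Sum>t\<in>{1..k}. a t $ i)))
         \<le> (1/real k) * (\<Sum>t\<in>{1..k}. sqnorm (a t))"
proof -
  have "sqnorm (Matrix.vec n (\<lambda>i. (1/real k) * (\<Sum>t\<in>{1..k}. a t $ i)))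
      = (\<Sum>i\<in>{0..<n}. ((1/real k) * (\<Sum>t\<in>{1..k}. a t $ i))^2)"
    unfolding sqnorm_def scalar_prod_def by (simp add: power2_eq_square)
  also have "\<dots> \<le> (\<Sum>i\<in>{0..<n}. (1/real k) * (\<Sum>t\<in>{1..k}. (a t $ i)^2))"
  proof (rule sum_mono)
    fix i
    have cs: "(\<Sum>t\<in>{1..k}. a t $ i)^2 \<le> (\<Sum>t\<in>{1..k}. (a t $ i)^2) * real k"
      using sum_squared_le_sum_of_squares[of "\<lambda>t. a t $ i" "{1..k}"] by simp
    have "((1/real k) * (\<Sum>t\<in>{1..k}. a t $ i))^2 = (1/real k)^2 * (\<Sum>t\<in>{1..k}. a t $ i)^2"
      by (rule power_mult_distrib)
    also have "\<dots> \<le> (1/real k)^2 * ((\<Sum>t\<in>{1..k}. (a t $ i)^2) * real k)"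
      by (rule mult_left_mono[OF cs]) simp
    also have "\<dots> = (1/real k) * (\<Sum>t\<in>{1..k}. (a t $ i)^2)"
      using k by (simp add: power2_eq_square field_simps)
    finally show "((1/real k) * (\<Sum>t\<in>{1..k}. a t $ i))^2 \<le> (1/real k) * (\<Sum>t\<in>{1..k}. (a t $ i)^2)" .
  qed
  also have "\<dots> = (1/real k) * (\<Sum>i\<in>{0..<n}. (\<Sum>t\<in>{1..k}. (a t $ i)^2))"
    by (rule sum_distrib_left[symmetric])
  also have "(\<Sum>i\<in>{0..<n}. (\<Sum>t\<in>{1..k}. (a t $ i)^2)) = (\<Sum>t\<in>{1..k}. (\<Sum>i\<in>{0..<n}. (a t $ i)^2))"
    by (rule sum.swap)
  also have "(\<Sum>t\<in>{1..k}. (\<Sum>i\<in>{0..<n}. (a t $ i)^2)) = (\<Sum>t\<in>{1..k}. sqnorm (a t))"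
  proof (rule sum.cong)
    fix t assume "t \<in> {1..k}"
    hence "dim_vec (a t) = n" using a by auto
    thus "(\<Sum>i\<in>{0..<n}. (a t $ i)^2) = sqnorm (a t)"
      unfolding sqnorm_def scalar_prod_def by (simp add: power2_eq_square)
  qed simp
  finally show ?thesis .
qed

lemma avg_mat:
  fixes a :: "nat \<Rightarrow> real Matrix.vec" and P :: "real mat"
  assumes P: "P \<in> carrier_mat nr n" and a: "\<And>t. t \<in> {1..k} \<Longrightarrow> a t \<in> carrier_vec n"
  shows "P *\<^sub>v Matrix.vec n (\<lambda>i. (1/real k) * (\<Sum>t\<in>{1..k}. a t $ i))
       = Matrix.vec nr (\<lambda>i. (1/real k) * (\<Sum>t\<in>{1..k}. (P *\<^sub>v a t) $ i))"
proof (rule eq_vecI)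
  fix i assume "i < dim_vec (Matrix.vec nr (\<lambda>i. (1/real k) * (\<Sum>t\<in>{1..k}. (P *\<^sub>v a t) $ i)))"
  hence i: "i < nr" by simp
  have "(P *\<^sub>v Matrix.vec n (\<lambda>i. (1/real k) * (\<Sum>t\<in>{1..k}. a t $ i))) $ i
      = (\<Sum>j\<in>{0..<n}. P $$ (i,j) * ((1/real k) * (\<Sum>t\<in>{1..k}. a t $ j)))"
    using i P by (simp add: scalar_prod_def)
  also have "\<dots> = (1/real k) * (\<Sum>t\<in>{1..k}. (\<Sum>j\<in>{0..<n}. P $$ (i,j) * a t $ j))"
    by (simp add: sum_distrib_left sum.swap[of _ "{0..<n}"] algebra_simps)
  also have "(\<Sum>t\<in>{1..k}. (\<Sum>j\<in>{0..<n}. P $$ (i,j) * a t $ j)) = (\<Sum>t\<in>{1..k}. (P *\<^sub>v a t) $ i)"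
  proof (rule sum.cong)
    fix t assume "t \<in> {1..k}"
    hence "dim_vec (a t) = n" using a by auto
    thus "(\<Sum>j\<in>{0..<n}. P $$ (i,j) * a t $ j) = (P *\<^sub>v a t) $ i"
      using i P by (simp add: scalar_prod_def)
  qed simp
  finally show "(P *\<^sub>v Matrix.vec n (\<lambda>i. (1/real k) * (\<Sum>t\<in>{1..k}. a t $ i))) $ i
      = Matrix.vec nr (\<lambda>i. (1/real k) * (\<Sum>t\<in>{1..k}. (P *\<^sub>v a t) $ i)) $ i" using i by simp
qed (use P in simp)

lemma wbar_avg:
  assumes S: "in_S d T X y" and g: "good T \<tau>" and k: "k \<ge> 1"
  shows "wbar d X y \<tau> k - wstar d T X y
       = Matrix.vec d (\<lambda>i. (1/real k) * (\<Sum>t\<in>{1..k}. (iter d X y \<tau> t - wstar d T X y) $ i))"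
proof -
  define ws where "ws = wstar d T X y"
  have wsc: "ws \<in> carrier_vec d" using wstar_props[OF S] unfolding ws_def by auto
  have ic: "(\<lambda>t. iter d X y \<tau> t) \<in> {1..k} \<rightarrow> carrier_vec d" using iter_carrier[OF S g] by auto
  have fc: "finsum_vec TYPE(real) d (\<lambda>t. iter d X y \<tau> t) {1..k} \<in> carrier_vec d"
    using finsum_vec_closed[OF ic] .
  show ?thesis unfolding ws_def[symmetric]
  proof (rule eq_vecI)
    fix i assume "i < dim_vec (Matrix.vec d (\<lambda>i. (1/real k) * (\<Sum>t\<in>{1..k}. (iter d X y \<tau> t - ws) $ i)))"
    hence i: "i < d" by simp
    have "(wbar d X y \<tau> k - ws) $ i = (1/real k) * (\<Sum>t\<in>{1..k}. iter d X y \<tau> t $ i) - ws $ i"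
      unfolding wbar_def using i fc wsc index_finsum_vec[OF _ i ic] by simp
    also have "\<dots> = (1/real k) * (\<Sum>t\<in>{1..k}. (iter d X y \<tau> t $ i - ws $ i))"
      using k by (simp add: sum_subtractf field_simps)
    also have "\<dots> = (1/real k) * (\<Sum>t\<in>{1..k}. (iter d X y \<tau> t - ws) $ i)"
      using i wsc iter_carrier[OF S g] by simp
    finally show "(wbar d X y \<tau> k - ws) $ i
      = Matrix.vec d (\<lambda>i. (1/real k) * (\<Sum>t\<in>{1..k}. (iter d X y \<tau> t - ws) $ i)) $ i" using i by simp
  qed (use wsc fc in \<open>simp add: wbar_def\<close>)
qed

lemma fubini_pair:
  fixes h :: "'a \<times> 'b \<Rightarrow> real"
  assumes U: "finite (set_pmf U)" and Q: "finite (set_pmf Q)"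
  shows "measure_pmf.expectation (pair_pmf U Q) h
       = measure_pmf.expectation Q (\<lambda>b. measure_pmf.expectation U (\<lambda>a. h (a, b)))"
proof -
  have "measure_pmf.expectation (pair_pmf U Q) h = (\<Sum>x\<in>set_pmf U \<times> set_pmf Q. h x * pmf (pair_pmf U Q) x)"
    by (rule integral_measure_pmf_real) (use U Q in auto)
  also have "\<dots> = (\<Sum>x\<in>set_pmf U \<times> set_pmf Q. h x * (pmf U (fst x) * pmf Q (snd x)))"
    by (intro sum.cong refl) (metis pmf_pair prod.collapse)
  also have "\<dots> = (\<Sum>a\<in>set_pmf U. \<Sum>b\<in>set_pmf Q. h (a,b) * (pmf U a * pmf Q b))"
    by (simp add: sum.cartesian_product case_prod_beta)
  also have "\<dots> = (\<Sum>b\<in>set_pmf Q. (\<Sum>a\<in>set_pmf U. h (a,b) * pmf U a) * pmf Q b)"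
    by (subst sum.swap) (simp add: sum_distrib_right sum_distrib_left algebra_simps)
  also have "\<dots> = (\<Sum>b\<in>set_pmf Q. measure_pmf.expectation U (\<lambda>a. h (a, b)) * pmf Q b)"
  proof (rule sum.cong)
    fix b
    show "(\<Sum>a\<in>set_pmf U. h (a,b) * pmf U a) * pmf Q b = measure_pmf.expectation U (\<lambda>a. h (a, b)) * pmf Q b"
      by (subst integral_measure_pmf_real[of "set_pmf U"]) (use U in auto)
  qed simp
  also have "\<dots> = measure_pmf.expectation Q (\<lambda>b. measure_pmf.expectation U (\<lambda>a. h (a, b)))"
    by (rule integral_measure_pmf_real[symmetric]) (use Q in auto)
  finally show ?thesis .
qed

lemma pi_indep:
  fixes F :: "nat \<Rightarrow> (nat \<Rightarrow> nat) \<Rightarrow> real"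
  assumes A: "finite A" and i: "i \<in> A" and U: "finite (set_pmf U)"
    and indep: "\<And>j \<tau> z. F j (\<tau>(i := z)) = F j \<tau>"
  shows "measure_pmf.expectation (Pi_pmf A dflt (\<lambda>_. U)) (\<lambda>\<tau>. F (\<tau> i) \<tau>)
       = measure_pmf.expectation (Pi_pmf A dflt (\<lambda>_. U)) (\<lambda>\<tau>. measure_pmf.expectation U (\<lambda>j. F j \<tau>))"
proof -
  define Q where "Q = Pi_pmf (A - {i}) dflt (\<lambda>_. U)"
  have Ai: "A = insert i (A - {i})" using i by auto
  have eq: "Pi_pmf A dflt (\<lambda>_. U) = map_pmf (\<lambda>(y, f). f(i := y)) (pair_pmf U Q)"
    unfolding Q_def by (subst Ai) (rule Pi_pmf_insert, use A in auto)
  have Qf: "finite (set_pmf Q)" unfolding Q_def using A U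
    by (subst set_Pi_pmf) (auto intro!: finite_PiE_dflt)
  have "measure_pmf.expectation (Pi_pmf A dflt (\<lambda>_. U)) (\<lambda>\<tau>. F (\<tau> i) \<tau>)
      = measure_pmf.expectation (pair_pmf U Q) (\<lambda>x. F (fst x) (snd x))"
    unfolding eq by (simp add: case_prod_beta indep)
  also have "\<dots> = measure_pmf.expectation Q (\<lambda>b. measure_pmf.expectation U (\<lambda>a. F a b))"
    using fubini_pair[OF U Qf, of "\<lambda>x. F (fst x) (snd x)"] by simp
  also have "\<dots> = measure_pmf.expectation (pair_pmf U Q) (\<lambda>x. measure_pmf.expectation U (\<lambda>j. F j (snd x)))"
    by (rule expectation_pair_pmf_snd[symmetric])
  also have "\<dots> = measure_pmf.expectation (Pi_pmf A dflt (\<lambda>_. U)) (\<lambda>\<tau>. measure_pmf.expectation U (\<lambda>j. F j \<tau>))"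
    unfolding eq by (simp add: case_prod_beta indep)
  finally show ?thesis .
qed

lemma tau_support:
  assumes T: "T \<ge> 1" and "\<tau> \<in> set_pmf (tau_pmf T k)"
  shows "good T \<tau>"
proof -
  have "\<tau> \<in> PiE_dflt {1..k} 1 (\<lambda>_. {1..T})"
    using assms(2) T unfolding tau_pmf_def by (subst (asm) set_Pi_pmf) (auto simp: o_def)
  hence h: "\<forall>x. (x \<in> {1..k} \<longrightarrow> \<tau> x \<in> {1..T}) \<and> (x \<notin> {1..k} \<longrightarrow> \<tau> x = 1)"
    unfolding PiE_dflt_def by blast
  show ?thesis unfolding good_def
  proof
    fix t show "\<tau> t \<in> {1..T}" using h T by (cases "t \<in> {1..k}") auto
  qed
qed

lemma tau_finite:
  assumes T: "T \<ge> 1"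
  shows "finite (set_pmf (tau_pmf T k))"
  unfolding tau_pmf_def using T by (subst set_Pi_pmf) (auto intro!: finite_PiE_dflt)


lemma pmf_int_cong:
  fixes f g :: "'a \<Rightarrow> real"
  shows "(\<And>x. x \<in> set_pmf M \<Longrightarrow> f x = g x) \<Longrightarrow> measure_pmf.expectation M f = measure_pmf.expectation M g"
  by (rule integral_cong_AE) (auto simp: AE_measure_pmf_iff)

lemma pmf_int_mono:
  fixes f g :: "'a \<Rightarrow> real"
  shows "finite (set_pmf M) \<Longrightarrow> (\<And>x. x \<in> set_pmf M \<Longrightarrow> f x \<le> g x)
    \<Longrightarrow> measure_pmf.expectation M f \<le> measure_pmf.expectation M g"
  by (rule integral_mono_AE) (auto simp: AE_measure_pmf_iff intro: integrable_measure_pmf_finite)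

definition gfun :: "nat \<Rightarrow> (nat \<Rightarrow> real mat) \<Rightarrow> real Matrix.vec \<Rightarrow> real" where
  "gfun T X v = (1 / real T) * (\<Sum>m=1..T. sqnorm (Pm X m *\<^sub>v v))"

lemma wbar_carrier:
  assumes S: "in_S d T X y" and g: "good T \<tau>"
  shows "wbar d X y \<tau> k \<in> carrier_vec d"
proof -
  have ic: "(\<lambda>t. iter d X y \<tau> t) \<in> {1..k} \<rightarrow> carrier_vec d" using iter_carrier[OF S g] by auto
  show ?thesis unfolding wbar_def using finsum_vec_closed[OF ic] by simp
qed

lemma gfun_jensen:
  assumes S: "in_S d T X y" and g: "good T \<tau>" and k: "k \<ge> 1"
  shows "gfun T X (wbar d X y \<tau> k - wstar d T X y)
    \<le> (1 / real k) * (\<Sum>t\<in>{1..k}. gfun T X (iter d X y \<tau> t - wstar d T X y))"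
proof -
  define e where "e t = iter d X y \<tau> t - wstar d T X y" for t
  have ec: "e t \<in> carrier_vec d" for t unfolding e_def using iter_carrier[OF S g] wstar_props[OF S] by auto
  have each: "sqnorm (Pm X m *\<^sub>v (wbar d X y \<tau> k - wstar d T X y))
      \<le> (1 / real k) * (\<Sum>t\<in>{1..k}. sqnorm (Pm X m *\<^sub>v e t))" if m: "m \<in> {1..T}" for m
  proof -
    have Pc: "Pm X m \<in> carrier_mat d d" using Pm_props(1)[OF S m] .
    have "Pm X m *\<^sub>v (wbar d X y \<tau> k - wstar d T X y)
        = Matrix.vec d (\<lambda>i. (1/real k) * (\<Sum>t\<in>{1..k}. (Pm X m *\<^sub>v e t) $ i))"
      unfolding wbar_avg[OF S g k] e_def[symmetric] using avg_mat[OF Pc, of k e] ec by simp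
    also have "sqnorm \<dots> \<le> (1 / real k) * (\<Sum>t\<in>{1..k}. sqnorm (Pm X m *\<^sub>v e t))"
      by (rule avg_sqnorm[OF k]) (use Pc ec in simp)
    finally show ?thesis .
  qed
  have "gfun T X (wbar d X y \<tau> k - wstar d T X y)
      \<le> (1 / real T) * (\<Sum>m=1..T. (1 / real k) * (\<Sum>t\<in>{1..k}. sqnorm (Pm X m *\<^sub>v e t)))"
    unfolding gfun_def by (intro mult_left_mono sum_mono each) auto
  also have "\<dots> = (1 / real k) * (\<Sum>t\<in>{1..k}. gfun T X (e t))"
    unfolding gfun_def
    by (simp add: sum_distrib_left algebra_simps, rule sum.swap)
  finally show ?thesis unfolding e_def .
qed

lemma gfun_le:
  assumes S: "in_S d T X y" and T: "T \<ge> 1" and v: "v \<in> carrier_vec d"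
  shows "gfun T X v \<le> sqnorm v"
proof -
  have "(\<Sum>m=1..T. sqnorm (Pm X m *\<^sub>v v)) \<le> (\<Sum>m=1..T. sqnorm v)"
    using Pm_contract[OF S _ v] by (intro sum_mono) auto
  also have "\<dots> = real T * sqnorm v" by simp
  finally have "(\<Sum>m=1..T. sqnorm (Pm X m *\<^sub>v v)) \<le> real T * sqnorm v" .
  hence "(1 / real T) * (\<Sum>m=1..T. sqnorm (Pm X m *\<^sub>v v)) \<le> (1 / real T) * (real T * sqnorm v)"
    by (intro mult_left_mono) auto
  thus ?thesis unfolding gfun_def using T by simp
qed

lemma exp_step:
  assumes S: "in_S d T X y" and T: "T \<ge> 1" and t: "1 \<le> t" "Suc t \<le> k"
  defines "D \<equiv> tau_pmf T k" and "ws \<equiv> wstar d T X y"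
  shows "measure_pmf.expectation D (\<lambda>\<tau>. gfun T X (iter d X y \<tau> t - ws))
    = measure_pmf.expectation D (\<lambda>\<tau>. sqnorm (iter d X y \<tau> t - ws))
      - measure_pmf.expectation D (\<lambda>\<tau>. sqnorm (iter d X y \<tau> (Suc t) - ws))"
proof -
  define U where "U = pmf_of_set {1..T}"
  define F where "F j \<tau> = sqnorm (Pm X j *\<^sub>v (iter d X y \<tau> t - ws))" for j \<tau>
  have fin: "finite (set_pmf D)" unfolding D_def using tau_finite[OF T] .
  have Uf: "finite (set_pmf U)" unfolding U_def using T by simp
  have indep: "F j (\<tau>(Suc t := z)) = F j \<tau>" for j \<tau> z
  proof -
    have "iter d X y (\<tau>(Suc t := z)) t = iter d X y \<tau> t" by (rule iter_cong) auto
    thus ?thesis unfolding F_def by simp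
  qed
  have Dk: "D = Pi_pmf {1..k} 1 (\<lambda>_. U)" unfolding D_def tau_pmf_def U_def ..
  have "measure_pmf.expectation D (\<lambda>\<tau>. F (\<tau> (Suc t)) \<tau>)
      = measure_pmf.expectation D (\<lambda>\<tau>. measure_pmf.expectation U (\<lambda>j. F j \<tau>))"
    unfolding Dk by (rule pi_indep[OF _ _ Uf indep]) (use t in auto)
  also have "\<dots> = measure_pmf.expectation D (\<lambda>\<tau>. gfun T X (iter d X y \<tau> t - ws))"
  proof (rule pmf_int_cong)
    fix \<tau>
    have "measure_pmf.expectation U (\<lambda>j. F j \<tau>) = (\<Sum>j\<in>{1..T}. F j \<tau>) / card {1..T}"
      unfolding U_def by (rule integral_pmf_of_set) (use T in auto)
    thus "measure_pmf.expectation U (\<lambda>j. F j \<tau>) = gfun T X (iter d X y \<tau> t - ws)"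
      unfolding gfun_def F_def by simp
  qed
  finally have 1: "measure_pmf.expectation D (\<lambda>\<tau>. F (\<tau> (Suc t)) \<tau>)
      = measure_pmf.expectation D (\<lambda>\<tau>. gfun T X (iter d X y \<tau> t - ws))" .
  have "measure_pmf.expectation D (\<lambda>\<tau>. F (\<tau> (Suc t)) \<tau>)
      = measure_pmf.expectation D (\<lambda>\<tau>. sqnorm (iter d X y \<tau> t - ws) - sqnorm (iter d X y \<tau> (Suc t) - ws))"
  proof (rule pmf_int_cong)
    fix \<tau> assume "\<tau> \<in> set_pmf D"
    hence g: "good T \<tau>" using tau_support[OF T] unfolding D_def by auto
    show "F (\<tau> (Suc t)) \<tau> = sqnorm (iter d X y \<tau> t - ws) - sqnorm (iter d X y \<tau> (Suc t) - ws)"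
      using sq_step[OF S g, of t] unfolding F_def ws_def by simp
  qed
  also have "\<dots> = measure_pmf.expectation D (\<lambda>\<tau>. sqnorm (iter d X y \<tau> t - ws))
      - measure_pmf.expectation D (\<lambda>\<tau>. sqnorm (iter d X y \<tau> (Suc t) - ws))"
    by (simp add: integrable_measure_pmf_finite[OF fin])
  finally show ?thesis using 1 by simp
qed

lemma telescope:
  fixes a b :: "nat \<Rightarrow> real"
  assumes "k \<ge> 1" and "\<And>t. 1 \<le> t \<Longrightarrow> t < k \<Longrightarrow> b t = a t - a (Suc t)"
  shows "(\<Sum>t\<in>{1..<k}. b t) = a 1 - a k"
  using assms
proof (induction k)
  case 0 thus ?case by simp
next
  case (Suc k)
  show ?case
  proof (cases "k = 0")
    case True thus ?thesis by simp
  next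
    case False
    hence k1: "k \<ge> 1" by simp
    have "(\<Sum>t\<in>{1..<Suc k}. b t) = (\<Sum>t\<in>{1..<k}. b t) + b k" using k1 by simp
    also have "(\<Sum>t\<in>{1..<k}. b t) = a 1 - a k" using Suc.IH[OF k1] Suc.prems by auto
    also have "b k = a k - a (Suc k)" using Suc.prems k1 by auto
    finally show ?thesis by simp
  qed
qed

theorem mainTheorem18:
  fixes d T :: nat and X :: "nat \<Rightarrow> real mat" and y :: "nat \<Rightarrow> real Matrix.vec"
  assumes "d \<ge> 1" and "T \<ge> 1" and "in_S d T X y"
  shows "\<forall>k\<ge>1.
    measure_pmf.expectation (tau_pmf T k)
      (\<lambda>\<tau>. (1 / real T) * (\<Sum>m=1..T. sqnorm (X m *\<^sub>v wbar d X y \<tau> k - y m)))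
    \<le> measure_pmf.expectation (tau_pmf T k)
      (\<lambda>\<tau>. (1 / real T) * (\<Sum>m=1..T.
         sqnorm ((1\<^sub>m d - kerproj (X m)) *\<^sub>v (wbar d X y \<tau> k - wstar d T X y))))
    \<and> measure_pmf.expectation (tau_pmf T k)
      (\<lambda>\<tau>. (1 / real T) * (\<Sum>m=1..T.
         sqnorm ((1\<^sub>m d - kerproj (X m)) *\<^sub>v (wbar d X y \<tau> k - wstar d T X y))))
    \<le> 1 / real k"
proof (intro allI impI conjI)
  fix k :: nat assume k: "k \<ge> 1"
  note S = assms(3) and T = assms(2)
  define D where "D = tau_pmf T k"
  define ws where "ws = wstar d T X y"
  have fin: "finite (set_pmf D)" unfolding D_def using tau_finite[OF T] .
  have gD: "good T \<tau>" if "\<tau> \<in> set_pmf D" for \<tau> using tau_support[OF T] that unfolding D_def by auto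
  have wsp: "ws \<in> carrier_vec d" "sqnorm ws \<le> 1" using wstar_props[OF S] unfolding ws_def by auto
  have G: "(1 / real T) * (\<Sum>m=1..T. sqnorm ((1\<^sub>m d - kerproj (X m)) *\<^sub>v (wbar d X y \<tau> k - ws)))
      = gfun T X (wbar d X y \<tau> k - ws)" for \<tau>
    unfolding gfun_def using Pm_kerproj[OF S] by simp
  show "measure_pmf.expectation (tau_pmf T k)
      (\<lambda>\<tau>. (1 / real T) * (\<Sum>m=1..T. sqnorm (X m *\<^sub>v wbar d X y \<tau> k - y m)))
    \<le> measure_pmf.expectation (tau_pmf T k)
      (\<lambda>\<tau>. (1 / real T) * (\<Sum>m=1..T.
         sqnorm ((1\<^sub>m d - kerproj (X m)) *\<^sub>v (wbar d X y \<tau> k - wstar d T X y))))"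
    unfolding D_def[symmetric] ws_def[symmetric]
  proof (rule pmf_int_mono[OF fin])
    fix \<tau> assume "\<tau> \<in> set_pmf D"
    hence g: "good T \<tau>" by (rule gD)
    have wc: "wbar d X y \<tau> k \<in> carrier_vec d" by (rule wbar_carrier[OF S g])
    have "(\<Sum>m=1..T. sqnorm (X m *\<^sub>v wbar d X y \<tau> k - y m))
        \<le> (\<Sum>m=1..T. sqnorm ((1\<^sub>m d - kerproj (X m)) *\<^sub>v (wbar d X y \<tau> k - ws)))"
      using first_pointwise[OF S _ wc] Pm_kerproj[OF S] unfolding ws_def by (intro sum_mono) auto
    thus "(1 / real T) * (\<Sum>m=1..T. sqnorm (X m *\<^sub>v wbar d X y \<tau> k - y m))
        \<le> (1 / real T) * (\<Sum>m=1..T. sqnorm ((1\<^sub>m d - kerproj (X m)) *\<^sub>v (wbar d X y \<tau> k - ws)))"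
      by (intro mult_left_mono) auto
  qed
  define s where "s t = measure_pmf.expectation D (\<lambda>\<tau>. sqnorm (iter d X y \<tau> t - ws))" for t
  define b where "b t = measure_pmf.expectation D (\<lambda>\<tau>. gfun T X (iter d X y \<tau> t - ws))" for t
  have bstep: "b t = s t - s (Suc t)" if "1 \<le> t" "t < k" for t
    unfolding b_def s_def D_def ws_def using exp_step[OF S T, of t k] that by simp
  have bk: "b k \<le> s k"
    unfolding b_def s_def
    by (rule pmf_int_mono[OF fin], rule gfun_le[OF S T])
       (use iter_carrier[OF S gD] wsp in auto)
  have s1: "s 1 \<le> 1"
  proof -
    have "s 1 \<le> measure_pmf.expectation D (\<lambda>\<tau>. 1)"
      unfolding s_def
    proof (rule pmf_int_mono[OF fin])
      fix \<tau> assume "\<tau> \<in> set_pmf D"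
      hence g: "good T \<tau>" by (rule gD)
      have "sqnorm (iter d X y \<tau> 0 - ws) = sqnorm (iter d X y \<tau> (Suc 0) - ws)
          + sqnorm (Pm X (\<tau> (Suc 0)) *\<^sub>v (iter d X y \<tau> 0 - ws))"
        using sq_step[OF S g, of 0] unfolding ws_def .
      moreover have "sqnorm (iter d X y \<tau> 0 - ws) = sqnorm ws"
      proof -
        have "iter d X y \<tau> 0 - ws = (-1) \<cdot>\<^sub>v ws" using wsp(1) by (intro eq_vecI) auto
        thus ?thesis by (simp add: sqnorm_smult)
      qed
      ultimately show "sqnorm (iter d X y \<tau> 1 - ws) \<le> 1"
        using wsp(2) sqnorm_nonneg[of "Pm X (\<tau> (Suc 0)) *\<^sub>v (iter d X y \<tau> 0 - ws)"] by simp
    qed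
    thus ?thesis by simp
  qed
  have sumb: "(\<Sum>t\<in>{1..k}. b t) \<le> 1"
  proof -
    have "{1..k} = insert k {1..<k}" using k by auto
    hence "(\<Sum>t\<in>{1..k}. b t) = b k + (\<Sum>t\<in>{1..<k}. b t)" by simp
    also have "(\<Sum>t\<in>{1..<k}. b t) = s 1 - s k" by (rule telescope[where a=s and b=b, OF k bstep])
    finally show ?thesis using bk s1 by simp
  qed
  have "measure_pmf.expectation D (\<lambda>\<tau>. (1 / real T) * (\<Sum>m=1..T.
         sqnorm ((1\<^sub>m d - kerproj (X m)) *\<^sub>v (wbar d X y \<tau> k - ws))))
      \<le> measure_pmf.expectation D (\<lambda>\<tau>. (1 / real k) * (\<Sum>t\<in>{1..k}. gfun T X (iter d X y \<tau> t - ws)))"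
    unfolding G
  proof (rule pmf_int_mono[OF fin])
    fix \<tau> assume "\<tau> \<in> set_pmf D"
    thus "gfun T X (wbar d X y \<tau> k - ws) \<le> (1 / real k) * (\<Sum>t\<in>{1..k}. gfun T X (iter d X y \<tau> t - ws))"
      using gfun_jensen[OF S gD k] unfolding ws_def by blast
  qed
  also have "\<dots> = (1 / real k) * (\<Sum>t\<in>{1..k}. b t)"
    unfolding b_def
    by (simp add: integral_sum integrable_measure_pmf_finite[OF fin])
  also have "\<dots> \<le> 1 / real k" using sumb by (simp add: divide_right_mono)
  finally show "measure_pmf.expectation (tau_pmf T k)
      (\<lambda>\<tau>. (1 / real T) * (\<Sum>m=1..T.
         sqnorm ((1\<^sub>m d - kerproj (X m)) *\<^sub>v (wbar d X y \<tau> k - wstar d T X y))))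
    \<le> 1 / real k" unfolding D_def ws_def .
qed


end
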